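(* Let $G$ be a group of order $k\ge2$. Then for every $n\ge1$ the $(G,* )$-graded $n$-codimension of $M_k(\mathbb{C})$ (with the $G$-crossed-product grading and the transpose involution) satisfies $c^G_n=m_k(n)$. In particular $c^G_n$ depends only on $k$ and not on the group $G$.
   Context: Let $G=\{g_1=e,\dots,g_k\}$. Index rows/columns of $k\times k$ matrices by $G$, let $E_{a,b}$ be matrix units, $P_g=\sum_{h\in G}E_{h,hg}$, and $M_k(\mathbb{C})_g=\{DP_g: D\text{ diagonal}\}$ (the $G$-crossed-product grading); $*$ is transpose. $F=\mathbb{Q}\{x_{i,g},x^*_{i,g}: i\ge1,g\in G\}$ is the free algebra; $I(G,* )$ is the set of $f\in F$ vanishing under every substitution $x_{i,g}\mapsto A_{i,g}\in M_k(\mathbb{C})_g$, $x^*_{i,g}\mapsto A_{i,g}^T$. $P^G_n$ is the $\mathbb{Q}$-span of the monomials $x^{\epsilon_1}_{\sigma(1),h_1}\cdots x^{\epsilon_n}_{\sigma(n),h_n}$ with $\sigma\in S_n$, $h_1,\dots,h_n\in G$, each $\epsilon_i\in\{\text{nothing},*\}$ (a space of dimension $2^nk^nn!$), and $c^G_n=\dim_{\mathbb{Q}}P^G_n/(P^G_n\cap I(G,* ))$. A labeled graph on $G$ with $n$ edges has vertex set $G$ and $n$ directed edges labeled $1,\dots,n$, edge $i$ being an ordered pair (initial vertex, terminal vertex) in $G\times G$ (loops and multiple edges allowed). $m_k(n)$ is the number of such graphs that admit an Eulerian path starting at $e$ in the underlying undirected graph, i.e., a walk ignoring orientations that starts at $e$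 and uses every edge exactly once. *)

theory Defs
  imports Complex_Main "HOL-Algebra.Group" "HOL-Library.FuncSet" "HOL-Library.Function_Algebras"
begin

text \<open>Matrices indexed by the carrier of G (k x k, k = |G|) are functions 'a => 'a => complex;
only entries indexed by elements of the carrier are relevant.\<close>

type_synonym 'a gmat = "'a \<Rightarrow> 'a \<Rightarrow> complex"

definition gmat_mult :: "('a, 'b) monoid_scheme \<Rightarrow> 'a gmat \<Rightarrow> 'a gmat \<Rightarrow> 'a gmat" where
  "gmat_mult G M N = (\<lambda>a b. \<Sum>c\<in>carrier G. M a c * N c b)"

definition gmat_one :: "'a gmat" where
  "gmat_one = (\<lambda>a b. if a = b then 1 else 0)"

definition gmat_transpose :: "'a gmat \<Rightarrow> 'a gmat" where
  "gmat_transpose M = (\<lambda>a b. M b a)"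

text \<open>Homogeneous component of degree g of the crossed-product grading:
 matrices D P_g with D diagonal, i.e. entry (a,b) may be nonzero only if b = a g.\<close>
definition graded_comp :: "('a, 'b) monoid_scheme \<Rightarrow> 'a \<Rightarrow> 'a gmat set" where
  "graded_comp G g = {M. \<forall>a\<in>carrier G. \<forall>b\<in>carrier G. b \<noteq> a \<otimes>\<^bsub>G\<^esub> g \<longrightarrow> M a b = 0}"

text \<open>A multilinear monomial x^{eps_1}_{sigma(1),h_1} ... x^{eps_n}_{sigma(n),h_n} is the list
 of triples (sigma(j), h_j, eps_j) (True = starred variable).\<close>
definition mono_words :: "('a, 'b) monoid_scheme \<Rightarrow> nat \<Rightarrow> (nat \<times> 'a \<times> bool) list set" where
  "mono_words G n = {w. length w = n \<and> set (map fst w) = {1..n} \<and>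
                   (\<forall>x\<in>set w. fst (snd x) \<in> carrier G)}"

definition eval_mono :: "('a, 'b) monoid_scheme \<Rightarrow> (nat \<Rightarrow> 'a \<Rightarrow> 'a gmat) \<Rightarrow> (nat \<times> 'a \<times> bool) list \<Rightarrow> 'a gmat" where
  "eval_mono G A w = foldr (\<lambda>(i, g, s) M. gmat_mult G (if s then gmat_transpose (A i g) else A i g) M) w gmat_one"

text \<open>P^G_n: rational linear combinations of the monomials of mono_words G n, represented by
 their coefficient functions.\<close>
definition Pn :: "('a, 'b) monoid_scheme \<Rightarrow> nat \<Rightarrow> ((nat \<times> 'a \<times> bool) list \<Rightarrow> rat) set" where
  "Pn G n = {c. \<forall>w. c w \<noteq> 0 \<longrightarrow> w \<in> mono_words G n}"

definition Pn_Id :: "('a, 'b) monoid_scheme \<Rightarrow> nat \<Rightarrow> ((nat \<times> 'a \<times> bool) list \<Rightarrow> rat) set" where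
  "Pn_Id G n = {c \<in> Pn G n. \<forall>A. (\<forall>i g. g \<in> carrier G \<longrightarrow> A i g \<in> graded_comp G g) \<longrightarrow>
      (\<forall>a\<in>carrier G. \<forall>b\<in>carrier G.
         (\<Sum>w\<in>mono_words G n. of_rat (c w) * eval_mono G A w a b) = 0)}"

definition qscale :: "rat \<Rightarrow> ('m \<Rightarrow> rat) \<Rightarrow> ('m \<Rightarrow> rat)" where
  "qscale r f = (\<lambda>x. r * f x)"

text \<open>c^G_n = dim_Q (P^G_n / (P^G_n \<inter> I(G,*))) = dim P^G_n - dim (P^G_n \<inter> I(G,*)).\<close>
definition graded_codim :: "('a, 'b) monoid_scheme \<Rightarrow> nat \<Rightarrow> nat" where
  "graded_codim G n = vector_space.dim qscale (Pn G n) - vector_space.dim qscale (Pn_Id G n)"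

text \<open>Labeled graphs on vertex set V with edges 1..n: maps {1..n} -> V x V (initial, terminal).
 Eulerian path from v0 in the underlying undirected graph.\<close>
definition has_euler_path_from :: "(nat \<Rightarrow> 'v \<times> 'v) \<Rightarrow> nat \<Rightarrow> 'v \<Rightarrow> bool" where
  "has_euler_path_from E n v0 \<longleftrightarrow> (\<exists>es vs. distinct es \<and> set es = {1..n} \<and>
      length vs = Suc n \<and> vs ! 0 = v0 \<and>
      (\<forall>j<n. E (es ! j) = (vs ! j, vs ! Suc j) \<or> E (es ! j) = (vs ! Suc j, vs ! j)))"

definition euler_graph_count :: "'v set \<Rightarrow> 'v \<Rightarrow> nat \<Rightarrow> nat" where
  "euler_graph_count V v0 n = card {E \<in> {1..n} \<rightarrow>\<^sub>E V \<times> V. has_euler_path_from E n v0}"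

definition m_count :: "nat \<Rightarrow> nat \<Rightarrow> nat" where
  "m_count k n = euler_graph_count {0..<k} (0::nat) n"

end

theory Submission
  imports Defs "HOL-Combinatorics.Transposition"
begin


lemma sum_fun_app: "(sum f A) x = (\<Sum>a\<in>A. f a x)"
  by (induction A rule: infinite_finite_induct) auto

interpretation qv: vector_space "qscale :: rat \<Rightarrow> ('m \<Rightarrow> rat) \<Rightarrow> 'm \<Rightarrow> rat"
  by unfold_locales (auto simp: qscale_def fun_eq_iff algebra_simps)

definition dlt :: "'m \<Rightarrow> 'm \<Rightarrow> rat" where "dlt w = (\<lambda>x. if x = w then 1 else 0)"

lemma qscale_app[simp]: "qscale r f x = r * f x" by (simp add: qscale_def)

lemma sum_dlt_expand:
  assumes "finite S" shows "(\<Sum>w\<in>S. qscale (u w) (dlt w)) x = (if x \<in> S then u x else 0)"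
proof -
  have "(\<Sum>w\<in>S. qscale (u w) (dlt w)) x = (\<Sum>w\<in>S. if w = x then u w else 0)"
    unfolding sum_fun_app by (rule sum.cong) (auto simp: dlt_def)
  then show ?thesis using sum.delta[OF assms, of x u] by simp
qed

lemma dim_full:
  fixes MW :: "'m set"
  assumes fin: "finite MW"
  shows "qv.dim {c. \<forall>w. c w \<noteq> 0 \<longrightarrow> w \<in> MW} = card MW"
proof (rule qv.dim_unique)
  show "dlt ` MW \<subseteq> {c. \<forall>w. c w \<noteq> 0 \<longrightarrow> w \<in> MW}" by (auto simp: dlt_def split: if_splits)
  have inj: "inj_on dlt MW" by (auto simp: inj_on_def dlt_def fun_eq_iff)
  show "card (dlt ` MW) = card MW" using card_image[OF inj] .
  show "qv.independent (dlt ` MW)"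
  proof (rule qv.independent_if_scalars_zero)
    show "finite (dlt ` MW)" using fin by simp
    fix f x assume s: "(\<Sum>x\<in>dlt ` MW. qscale (f x) x) = 0" and x: "x \<in> dlt ` MW"
    then obtain w0 where w0: "w0 \<in> MW" "x = dlt w0" by auto
    have "(\<Sum>x\<in>dlt ` MW. qscale (f x) x) = (\<Sum>w\<in>MW. qscale (f (dlt w)) (dlt w))"
      by (rule sum.reindex[OF inj, unfolded comp_def])
    then have "0 = (\<Sum>w\<in>MW. qscale (f (dlt w)) (dlt w)) w0" using s by simp
    then show "f x = 0" using sum_dlt_expand[OF fin, of "\<lambda>w. f (dlt w)" w0] w0 by simp
  qed
  show "{c. \<forall>w. c w \<noteq> 0 \<longrightarrow> w \<in> MW} \<subseteq> qv.span (dlt ` MW)"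
  proof
    fix c :: "'m \<Rightarrow> rat" assume c: "c \<in> {c. \<forall>w. c w \<noteq> 0 \<longrightarrow> w \<in> MW}"
    have "c = (\<Sum>w\<in>MW. qscale (c w) (dlt w))"
      using c by (auto simp: fun_eq_iff sum_dlt_expand[OF fin])
    also have "\<dots> \<in> qv.span (dlt ` MW)"
      by (intro qv.span_sum qv.span_scale qv.span_base) auto
    finally show "c \<in> qv.span (dlt ` MW)" .
  qed
qed

lemma dim_fib:
  fixes MW :: "'m set" and psi :: "'m \<Rightarrow> 'p"
  assumes fin: "finite MW"
  shows "qv.dim {c \<in> {c. \<forall>w. c w \<noteq> 0 \<longrightarrow> w \<in> MW}. \<forall>p\<in>psi ` MW. (\<Sum>w\<in>{w\<in>MW. psi w = p}. c w) = 0}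
     = card MW - card (psi ` MW)"
proof -
  define V where "V = {c \<in> {c. \<forall>w. (c::'m\<Rightarrow>rat) w \<noteq> 0 \<longrightarrow> w \<in> MW}. \<forall>p\<in>psi ` MW. (\<Sum>w\<in>{w\<in>MW. psi w = p}. c w) = 0}"
  define rep where "rep p = (SOME w. w \<in> MW \<and> psi w = p)" for p
  have rep: "rep p \<in> MW \<and> psi (rep p) = p" if "p \<in> psi ` MW" for p
    using that unfolding rep_def by (metis (mono_tags, lifting) imageE someI_ex)
  define R where "R = rep ` (psi ` MW)"
  have injrep: "inj_on rep (psi ` MW)" by (metis inj_onI rep)
  have RM: "R \<subseteq> MW" using rep by (auto simp: R_def)
  have repR: "w \<in> MW \<Longrightarrow> rep (psi w) \<in> R" for w by (auto simp: R_def)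
  define d where "d w = dlt w - dlt (rep (psi w))" for w :: 'm
  have dapp: "d w x = (if x = w then 1 else 0) - (if x = rep (psi w) then 1 else 0)" for w x
    by (simp add: d_def dlt_def)
  have notR: "rep (psi w) \<noteq> x" if "x \<notin> R" "w \<in> MW" for w x using repR that by auto
  have finf: "finite {w'\<in>MW. psi w' = p}" for p using fin by simp
  have dsum: "(\<Sum>w'\<in>{w'\<in>MW. psi w' = p}. d w w') = 0" if w: "w \<in> MW" for w p
  proof -
    have "(\<Sum>w'\<in>{w'\<in>MW. psi w' = p}. d w w') = (\<Sum>w'\<in>{w'\<in>MW. psi w' = p}. if w' = w then 1 else 0)
        - (\<Sum>w'\<in>{w'\<in>MW. psi w' = p}. if w' = rep (psi w) then 1 else 0)"
      by (simp add: dapp sum_subtractf)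
    also have "\<dots> = 0" using sum.delta[OF finf[of p], of w "\<lambda>_. 1::rat"] sum.delta[OF finf[of p], of "rep (psi w)" "\<lambda>_. 1::rat"]
      rep[of "psi w"] w by auto
    finally show ?thesis .
  qed
  have dV: "d w \<in> V" if w: "w \<in> MW" for w
    using dsum[OF w] w rep[of "psi w"] by (auto simp: V_def dapp split: if_splits)
  have injd: "inj_on d (MW - R)"
  proof (rule inj_onI)
    fix w1 w2 assume w1: "w1 \<in> MW - R" and w2: "w2 \<in> MW - R" and e: "d w1 = d w2"
    have "d w1 w1 = 1" using notR[of w1 w1] w1 by (simp add: dapp)
    moreover have "d w2 w1 = (if w1 = w2 then 1 else 0)" using notR[of w1 w2] w1 w2 by (simp add: dapp)
    ultimately show "w1 = w2" using e by (auto split: if_splits)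
  qed
  have finR: "finite (MW - R)" using fin by simp
  have "qv.dim V = card (MW - R)"
  proof (rule qv.dim_unique)
    show "d ` (MW - R) \<subseteq> V" using dV by auto
    show "card (d ` (MW - R)) = card (MW - R)" using card_image[OF injd] .
    show "qv.independent (d ` (MW - R))"
    proof (rule qv.independent_if_scalars_zero)
      show "finite (d ` (MW - R))" using finR by simp
      fix f x assume s: "(\<Sum>x\<in>d ` (MW - R). qscale (f x) x) = 0" and x: "x \<in> d ` (MW - R)"
      then obtain w0 where w0: "w0 \<in> MW - R" "x = d w0" by auto
      have "(\<Sum>x\<in>d ` (MW - R). qscale (f x) x) = (\<Sum>w\<in>MW - R. qscale (f (d w)) (d w))"
        by (rule sum.reindex[OF injd, unfolded comp_def])
      then have "0 = (\<Sum>w\<in>MW - R. qscale (f (d w)) (d w)) w0" using s by simp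
      also have "\<dots> = (\<Sum>w\<in>MW - R. if w = w0 then f (d w) else 0)"
        unfolding sum_fun_app by (rule sum.cong) (use w0 notR in \<open>auto simp: dapp\<close>)
      also have "\<dots> = f (d w0)" using sum.delta[OF finR, of w0 "\<lambda>w. f (d w)"] w0 by simp
      finally show "f x = 0" using w0 by simp
    qed
    show "V \<subseteq> qv.span (d ` (MW - R))"
    proof
      fix c :: "'m \<Rightarrow> rat" assume c: "c \<in> V"
      define e where "e = c - (\<Sum>w\<in>MW - R. qscale (c w) (d w))"
      have e0: "e x = 0" if x: "x \<notin> R" for x
      proof -
        have "(\<Sum>w\<in>MW - R. qscale (c w) (d w)) x = (\<Sum>w\<in>MW - R. if w = x then c w else 0)"
          unfolding sum_fun_app by (rule sum.cong) (use x notR in \<open>auto simp: dapp\<close>)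
        also have "\<dots> = (if x \<in> MW - R then c x else 0)" using sum.delta[OF finR, of x c] by simp
        finally show ?thesis using c x by (auto simp: e_def V_def)
      qed
      have esum: "(\<Sum>w'\<in>{w'\<in>MW. psi w' = p}. e w') = 0" if p: "p \<in> psi ` MW" for p
      proof -
        have "(\<Sum>w'\<in>{w'\<in>MW. psi w' = p}. e w') = (\<Sum>w'\<in>{w'\<in>MW. psi w' = p}. c w')
          - (\<Sum>w'\<in>{w'\<in>MW. psi w' = p}. \<Sum>w\<in>MW - R. c w * d w w')"
          by (simp add: e_def sum_fun_app sum_subtractf)
        also have "(\<Sum>w'\<in>{w'\<in>MW. psi w' = p}. \<Sum>w\<in>MW - R. c w * d w w') = (\<Sum>w\<in>MW - R. c w * (\<Sum>w'\<in>{w'\<in>MW. psi w' = p}. d w w'))"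
          by (simp add: sum.swap[of _ "{w'\<in>MW. psi w' = p}"] sum_distrib_left)
        also have "\<dots> = 0" using dsum by simp
        finally show ?thesis using c p by (auto simp: V_def)
      qed
      have "e = 0"
      proof
        fix x show "e x = 0 x"
        proof (cases "x \<in> R")
          case False then show ?thesis using e0 by simp
        next
          case True
          then obtain p where p: "p \<in> psi ` MW" "x = rep p" by (auto simp: R_def)
          have "(\<Sum>w'\<in>{w'\<in>MW. psi w' = p}. e w') = (\<Sum>w'\<in>{w'\<in>MW. psi w' = p}. if w' = x then e w' else 0)"
          proof (rule sum.cong[OF refl])
            fix w' assume w': "w' \<in> {w'\<in>MW. psi w' = p}"
            show "e w' = (if w' = x then e w' else 0)"
            proof (cases "w' \<in> R")
              case True
              then obtain q where "q \<in> psi ` MW" "w' = rep q" by (auto simp: R_def)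
              then show ?thesis using rep w' p by auto
            qed (use e0 in auto)
          qed
          also have "\<dots> = e x" using sum.delta[OF finf[of p], of x e] rep[OF p(1)] p by simp
          finally show ?thesis using esum[OF p(1)] by simp
        qed
      qed
      then have "c = (\<Sum>w\<in>MW - R. qscale (c w) (d w))" by (simp add: e_def)
      also have "\<dots> \<in> qv.span (d ` (MW - R))"
        by (intro qv.span_sum qv.span_scale qv.span_base) auto
      finally show "c \<in> qv.span (d ` (MW - R))" .
    qed
  qed
  also have "card (MW - R) = card MW - card R" using card_Diff_subset[OF finite_subset[OF RM fin] RM] .
  also have "card R = card (psi ` MW)" unfolding R_def using card_image[OF injrep] .
  finally show ?thesis unfolding V_def .
qed



definition nxt :: "('a,'b) monoid_scheme \<Rightarrow> 'a \<Rightarrow> (nat \<times> 'a \<times> bool) \<Rightarrow> 'a" where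
 "nxt G a x = (if snd (snd x) then a \<otimes>\<^bsub>G\<^esub> inv\<^bsub>G\<^esub> (fst (snd x)) else a \<otimes>\<^bsub>G\<^esub> (fst (snd x)))"
definition edg :: "('a,'b) monoid_scheme \<Rightarrow> 'a \<Rightarrow> (nat \<times> 'a \<times> bool) \<Rightarrow> 'a \<times> 'a" where
 "edg G a x = (if snd (snd x) then (a \<otimes>\<^bsub>G\<^esub> inv\<^bsub>G\<^esub> (fst (snd x)), a) else (a, a \<otimes>\<^bsub>G\<^esub> (fst (snd x))))"

fun walk :: "('a,'b) monoid_scheme \<Rightarrow> 'a \<Rightarrow> (nat \<times> 'a \<times> bool) list \<Rightarrow> 'a list" where
  "walk G a [] = [a]" | "walk G a (x#w) = a # walk G (nxt G a x) w"
fun endv :: "('a,'b) monoid_scheme \<Rightarrow> 'a \<Rightarrow> (nat \<times> 'a \<times> bool) list \<Rightarrow> 'a" where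
  "endv G a [] = a" | "endv G a (x#w) = endv G (nxt G a x) w"
fun gr :: "('a,'b) monoid_scheme \<Rightarrow> 'a \<Rightarrow> (nat \<times> 'a \<times> bool) list \<Rightarrow> nat \<Rightarrow> 'a \<times> 'a" where
  "gr G a [] = (\<lambda>_. undefined)" | "gr G a (x#w) = (gr G (nxt G a x) w)(fst x := edg G a x)"
fun prodv :: "('a,'b) monoid_scheme \<Rightarrow> (nat \<Rightarrow> 'a \<Rightarrow> 'a gmat) \<Rightarrow> 'a \<Rightarrow> (nat \<times> 'a \<times> bool) list \<Rightarrow> complex" where
  "prodv G A a [] = 1"
| "prodv G A a (x#w) = A (fst x) (fst (snd x)) (fst (edg G a x)) (snd (edg G a x)) * prodv G A (nxt G a x) w"

fun degw :: "('a,'b) monoid_scheme \<Rightarrow> 'a \<Rightarrow> (nat \<times> 'a \<times> bool) list \<Rightarrow> 'a \<Rightarrow> nat" where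
  "degw G a [] v = 0"
| "degw G a (x#w) v = of_bool (fst (edg G a x) = v) + of_bool (snd (edg G a x) = v) + degw G (nxt G a x) w v"

definition wfw :: "('a,'b) monoid_scheme \<Rightarrow> (nat \<times> 'a \<times> bool) list \<Rightarrow> bool" where
  "wfw G w \<longleftrightarrow> distinct (map fst w) \<and> (\<forall>x\<in>set w. fst (snd x) \<in> carrier G)"

lemma wfw_Cons[simp]: "wfw G (x#w) \<longleftrightarrow> fst x \<notin> fst ` set w \<and> fst (snd x) \<in> carrier G \<and> wfw G w"
  by (auto simp: wfw_def)

lemma eval_mono_Cons: "eval_mono G A (x#w) = gmat_mult G (if snd (snd x) then gmat_transpose (A (fst x) (fst (snd x))) else A (fst x) (fst (snd x))) (eval_mono G A w)"
  by (cases x) (simp add: eval_mono_def)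

context group begin

lemma nxt_closed: "a \<in> carrier G \<Longrightarrow> fst (snd x) \<in> carrier G \<Longrightarrow> nxt G a x \<in> carrier G"
  by (simp add: nxt_def)

lemma edg_closed: "a \<in> carrier G \<Longrightarrow> fst (snd x) \<in> carrier G \<Longrightarrow> edg G a x \<in> carrier G \<times> carrier G"
  by (simp add: edg_def)

lemma edg_form: "a \<in> carrier G \<Longrightarrow> fst (snd x) \<in> carrier G \<Longrightarrow> snd (edg G a x) = fst (edg G a x) \<otimes> fst (snd x)"
  by (simp add: edg_def m_assoc)

lemma edg_ends: "a \<in> carrier G \<Longrightarrow> fst (snd x) \<in> carrier G \<Longrightarrow>
   edg G a x = (a, nxt G a x) \<or> edg G a x = (nxt G a x, a)"
  by (simp add: edg_def nxt_def)

lemma eval_prodv: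
  assumes A: "\<And>i g. g \<in> carrier G \<Longrightarrow> A i g \<in> graded_comp G g"
    and fin: "finite (carrier G)"
  shows "wfw G w \<Longrightarrow> a \<in> carrier G \<Longrightarrow> b \<in> carrier G \<Longrightarrow>
    eval_mono G A w a b = (if b = endv G a w then prodv G A a w else 0)"
proof (induction w arbitrary: a)
  case Nil
  then show ?case by (simp add: eval_mono_def gmat_one_def)
next
  case (Cons x w)
  obtain i g s where x: "x = (i,g,s)" by (cases x) auto
  have g: "g \<in> carrier G" using Cons x by simp
  let ?M = "(if s then gmat_transpose (A i g) else A i g)"
  have Mz: "\<And>c. c \<in> carrier G \<Longrightarrow> c \<noteq> nxt G a x \<Longrightarrow> ?M a c = 0"
  proof -
    fix c assume c: "c \<in> carrier G" "c \<noteq> nxt G a x"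
    show "?M a c = 0"
    proof (cases s)
      case True
      have "a \<noteq> c \<otimes> g"
      proof
        assume "a = c \<otimes> g"
        then have "c = a \<otimes> inv g" using c g Cons.prems by (simp add: m_assoc)
        then show False using c True x by (simp add: nxt_def)
      qed
      then show ?thesis using A[OF g] True c Cons.prems
        by (simp add: graded_comp_def gmat_transpose_def)
    next
      case False
      then show ?thesis using A[OF g] c Cons.prems x by (simp add: graded_comp_def nxt_def)
    qed
  qed
  have n: "nxt G a x \<in> carrier G" using nxt_closed Cons.prems g x by simp
  have "eval_mono G A (x#w) a b = (\<Sum>c\<in>carrier G. ?M a c * eval_mono G A w c b)"
    by (simp add: eval_mono_Cons gmat_mult_def x)
  also have "\<dots> = ?M a (nxt G a x) * eval_mono G A w (nxt G a x) b"
  proof -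
    have "(\<Sum>c\<in>carrier G. ?M a c * eval_mono G A w c b) = (\<Sum>c\<in>carrier G. if c = nxt G a x then ?M a c * eval_mono G A w c b else 0)"
      by (rule sum.cong) (use Mz in auto)
    also have "\<dots> = ?M a (nxt G a x) * eval_mono G A w (nxt G a x) b"
      using sum.delta[OF fin, of "nxt G a x" "\<lambda>c. ?M a c * eval_mono G A w c b"] n by (simp del: if_image_distrib)
    finally show ?thesis .
  qed
  also have "?M a (nxt G a x) = A i g (fst (edg G a x)) (snd (edg G a x))"
    using x by (simp add: edg_def nxt_def gmat_transpose_def)
  finally show ?case using Cons n x by simp
qed

lemma nxt_trans: "a \<in> carrier G \<Longrightarrow> b \<in> carrier G \<Longrightarrow> fst (snd x) \<in> carrier G \<Longrightarrow> nxt G (a \<otimes> b) x = a \<otimes> nxt G b x"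
  by (simp add: nxt_def m_assoc)

lemma edg_trans: "a \<in> carrier G \<Longrightarrow> b \<in> carrier G \<Longrightarrow> fst (snd x) \<in> carrier G \<Longrightarrow>
   edg G (a \<otimes> b) x = (a \<otimes> fst (edg G b x), a \<otimes> snd (edg G b x))"
  by (simp add: edg_def m_assoc)

lemma edg_g: "b \<in> carrier G \<Longrightarrow> fst (snd x) \<in> carrier G \<Longrightarrow>
   inv (fst (edg G b x)) \<otimes> snd (edg G b x) = fst (snd x)"
  by (simp add: edg_def m_assoc inv_mult_group) (metis inv_closed l_inv r_one m_assoc one_closed r_inv l_one)

lemma endv_trans: "wfw G w \<Longrightarrow> a \<in> carrier G \<Longrightarrow> b \<in> carrier G \<Longrightarrow> endv G (a \<otimes> b) w = a \<otimes> endv G b w"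
  by (induction w arbitrary: b) (auto simp: nxt_trans nxt_closed)

lemma endv_closed: "wfw G w \<Longrightarrow> b \<in> carrier G \<Longrightarrow> endv G b w \<in> carrier G"
  by (induction w arbitrary: b) (auto simp: nxt_closed)

lemma gr_out: "i \<notin> fst ` set w \<Longrightarrow> gr G b w i = undefined"
  by (induction w arbitrary: b) auto

lemma gr_closed: "wfw G w \<Longrightarrow> b \<in> carrier G \<Longrightarrow> i \<in> fst ` set w \<Longrightarrow> gr G b w i \<in> carrier G \<times> carrier G"
proof (induction w arbitrary: b)
  case Nil then show ?case by simp
next
  case (Cons x w)
  show ?case
  proof (cases "i = fst x")
    case True then show ?thesis using Cons edg_closed by simp
  next
    case False then show ?thesis using Cons nxt_closed by simp
  qed
qed

lemma prodv_trans:
  "wfw G w \<Longrightarrow> a \<in> carrier G \<Longrightarrow> b \<in> carrier G \<Longrightarrow>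
   prodv G A (a \<otimes> b) w = (\<Prod>i\<in>fst ` set w. case gr G b w i of (u,v) \<Rightarrow> A i (inv u \<otimes> v) (a \<otimes> u) (a \<otimes> v))"
proof (induction w arbitrary: b)
  case Nil then show ?case by simp
next
  case (Cons x w)
  have g: "fst (snd x) \<in> carrier G" and ni: "fst x \<notin> fst ` set w" and ww: "wfw G w" using Cons by auto
  have n: "nxt G b x \<in> carrier G" using nxt_closed Cons g by simp
  have "prodv G A (a \<otimes> b) (x#w) = A (fst x) (fst (snd x)) (a \<otimes> fst (edg G b x)) (a \<otimes> snd (edg G b x)) *
     prodv G A (a \<otimes> nxt G b x) w"
    using Cons g by (simp add: edg_trans nxt_trans)
  also have "prodv G A (a \<otimes> nxt G b x) w = (\<Prod>i\<in>fst ` set w. case gr G (nxt G b x) w i of (u,v) \<Rightarrow> A i (inv u \<otimes> v) (a \<otimes> u) (a \<otimes> v))"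
    using Cons.IH[OF ww Cons.prems(2) n] .
  also have "\<dots> = (\<Prod>i\<in>fst ` set w. case gr G b (x#w) i of (u,v) \<Rightarrow> A i (inv u \<otimes> v) (a \<otimes> u) (a \<otimes> v))"
  proof (rule prod.cong[OF refl])
    fix i assume "i \<in> fst ` set w"
    then have "i \<noteq> fst x" using ni by blast
    then show "(case gr G (nxt G b x) w i of (u,v) \<Rightarrow> A i (inv u \<otimes> v) (a \<otimes> u) (a \<otimes> v)) = (case gr G b (x#w) i of (u,v) \<Rightarrow> A i (inv u \<otimes> v) (a \<otimes> u) (a \<otimes> v))"
      by simp
  qed
  finally show ?case using ni edg_g[OF Cons.prems(3) g]
    by (simp add: prod.insert case_prod_beta)
qed

lemma mw_props: assumes "w \<in> mono_words G n" shows "wfw G w" "fst ` set w = {1..n}" "length w = n"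
proof -
  have l: "length w = n" and s: "set (map fst w) = {1..n}" and c: "\<forall>x\<in>set w. fst (snd x) \<in> carrier G"
    using assms by (auto simp: mono_words_def)
  have "distinct (map fst w)" using l s by (intro card_distinct) simp
  then show "wfw G w" using c by (simp add: wfw_def)
  show "fst ` set w = {1..n}" using s by simp
  show "length w = n" by fact
qed

lemma finite_mw: "finite (carrier G) \<Longrightarrow> finite (mono_words G n)"
proof -
  assume f: "finite (carrier G)"
  have "mono_words G n \<subseteq> {xs. set xs \<subseteq> {1..n} \<times> carrier G \<times> UNIV \<and> length xs = n}"
    by (auto simp: mono_words_def) (metis atLeastAtMost_iff fst_conv image_eqI)+
  moreover have "finite {xs. set xs \<subseteq> {1..n} \<times> carrier G \<times> (UNIV::bool set) \<and> length xs = n}"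
    by (rule finite_lists_length_eq) (use f in auto)
  ultimately show ?thesis by (rule finite_subset)
qed

definition psi where "psi w = (gr G \<one> w, endv G \<one> w)"

lemma eval_psi:
  assumes A: "\<And>i g. g \<in> carrier G \<Longrightarrow> A i g \<in> graded_comp G g"
    and fin: "finite (carrier G)" and w: "w \<in> mono_words G n" and a: "a \<in> carrier G" and b: "b \<in> carrier G"
  shows "eval_mono G A w a b = (if b = a \<otimes> snd (psi w) then
     (\<Prod>i\<in>{1..n}. case fst (psi w) i of (u,v) \<Rightarrow> A i (inv u \<otimes> v) (a \<otimes> u) (a \<otimes> v)) else 0)"
proof -
  have ww: "wfw G w" and fs: "fst ` set w = {1..n}" using mw_props[OF w] by auto
  have "eval_mono G A w a b = (if b = endv G (a \<otimes> \<one>) w then prodv G A (a \<otimes> \<one>) w else 0)"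
    using eval_prodv[OF A fin ww a b] a by simp
  also have "\<dots> = (if b = a \<otimes> snd (psi w) then
     (\<Prod>i\<in>{1..n}. case fst (psi w) i of (u,v) \<Rightarrow> A i (inv u \<otimes> v) (a \<otimes> u) (a \<otimes> v)) else 0)"
    using endv_trans[OF ww a one_closed] prodv_trans[OF ww a one_closed, of A] fs by (simp add: psi_def)
  finally show ?thesis .
qed

lemma PnId_char:
  assumes fin: "finite (carrier G)"
  shows "Pn_Id G n = {c \<in> Pn G n. \<forall>p\<in>psi ` mono_words G n. (\<Sum>w\<in>{w\<in>mono_words G n. psi w = p}. c w) = 0}"
proof (rule Set.set_eqI, rule iffI)
  fix c assume c: "c \<in> Pn_Id G n"
  have cP: "c \<in> Pn G n" using c by (simp add: Pn_Id_def)
  have "(\<Sum>w\<in>{w\<in>mono_words G n. psi w = p}. c w) = 0" if p: "p \<in> psi ` mono_words G n" for p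
  proof -
    obtain w0 where w0: "w0 \<in> mono_words G n" "p = psi w0" using p by auto
    obtain \<Gamma>0 b0 where pp: "p = (\<Gamma>0, b0)" by (cases p)
    have b0: "b0 \<in> carrier G" using w0 pp endv_closed[OF mw_props(1)[OF w0(1)] one_closed] by (simp add: psi_def)
    define A where "A = (\<lambda>(i::nat) g u v. if \<Gamma>0 i = (u,v) \<and> v = u \<otimes> g then (1::complex) else 0)"
    have Ag: "A i g \<in> graded_comp G g" for i g by (auto simp: A_def graded_comp_def)
    have ev: "eval_mono G A w \<one> b0 = (if psi w = p then 1 else 0)" if w: "w \<in> mono_words G n" for w
    proof -
      have ww: "wfw G w" and fs: "fst ` set w = {1..n}" using mw_props[OF w] by auto
      have fac: "(case fst (psi w) i of (u,v) \<Rightarrow> A i (inv u \<otimes> v) (\<one> \<otimes> u) (\<one> \<otimes> v)) = (if \<Gamma>0 i = fst (psi w) i then 1 else 0)"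
        if i: "i \<in> {1..n}" for i
      proof -
        obtain u v where uv: "fst (psi w) i = (u,v)" by force
        have "(u,v) \<in> carrier G \<times> carrier G" using gr_closed[OF ww one_closed, of i] i fs uv by (simp add: psi_def)
        then have "v = u \<otimes> (inv u \<otimes> v)" by (simp add: m_assoc[symmetric])
        then show ?thesis using uv \<open>(u,v) \<in> _\<close> by (simp add: A_def)
      qed
      have pr: "(\<Prod>i\<in>{1..n}. case fst (psi w) i of (u,v) \<Rightarrow> A i (inv u \<otimes> v) (\<one> \<otimes> u) (\<one> \<otimes> v)) =
          (if fst (psi w) = \<Gamma>0 then 1 else 0)"
      proof (cases "\<forall>i\<in>{1..n}. \<Gamma>0 i = fst (psi w) i")
        case True
        have "fst (psi w) = \<Gamma>0"
        proof
          fix i show "fst (psi w) i = \<Gamma>0 i"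
          proof (cases "i \<in> {1..n}")
            case True then show ?thesis using \<open>\<forall>i\<in>{1..n}. _\<close> by simp
          next
            case False
            then show ?thesis using gr_out[of i w \<one>] gr_out[of i w0 \<one>] fs mw_props(2)[OF w0(1)] w0 pp
              by (simp add: psi_def)
          qed
        qed
        then show ?thesis using True fac by simp
      next
        case False
        then obtain i where i: "i \<in> {1..n}" "\<Gamma>0 i \<noteq> fst (psi w) i" by blast
        then have "fst (psi w) \<noteq> \<Gamma>0" by auto
        moreover have "(\<Prod>i\<in>{1..n}. case fst (psi w) i of (u,v) \<Rightarrow> A i (inv u \<otimes> v) (\<one> \<otimes> u) (\<one> \<otimes> v)) = 0"
          by (rule prod_zero) (use i fac in auto)
        ultimately show ?thesis by simp
      qed
      show ?thesis using eval_psi[OF Ag fin w one_closed b0] pr b0 pp endv_closed[OF ww one_closed]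
        by (auto simp: psi_def prod_eq_iff)
    qed
    have "0 = (\<Sum>w\<in>mono_words G n. of_rat (c w) * eval_mono G A w \<one> b0)"
      using c b0 Ag by (simp add: Pn_Id_def)
    also have "\<dots> = (\<Sum>w\<in>mono_words G n. if psi w = p then of_rat (c w) else 0)"
      by (rule sum.cong) (auto simp: ev)
    also have "\<dots> = (\<Sum>w\<in>{w\<in>mono_words G n. psi w = p}. of_rat (c w))"
      using finite_mw[OF fin] by (simp add: sum.inter_filter)
    also have "\<dots> = (of_rat (\<Sum>w\<in>{w\<in>mono_words G n. psi w = p}. c w) :: complex)"
      by (simp add: of_rat_sum)
    finally show ?thesis by simp
  qed
  then show "c \<in> {c \<in> Pn G n. \<forall>p\<in>psi ` mono_words G n. (\<Sum>w\<in>{w\<in>mono_words G n. psi w = p}. c w) = 0}"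
    using cP by blast
next
  fix c assume c: "c \<in> {c \<in> Pn G n. \<forall>p\<in>psi ` mono_words G n. (\<Sum>w\<in>{w\<in>mono_words G n. psi w = p}. c w) = 0}"
  show "c \<in> Pn_Id G n" unfolding Pn_Id_def
  proof (intro CollectI conjI allI impI ballI)
    show "c \<in> Pn G n" using c by simp
    fix A :: "nat \<Rightarrow> 'a \<Rightarrow> 'a gmat" and a b
    assume A: "\<forall>i g. g \<in> carrier G \<longrightarrow> A i g \<in> graded_comp G g" and a: "a \<in> carrier G" and b: "b \<in> carrier G"
    define F where "F p = (if b = a \<otimes> snd p then
     (\<Prod>i\<in>{1..n}. case fst p i of (u,v) \<Rightarrow> A i (inv u \<otimes> v) (a \<otimes> u) (a \<otimes> v)) else 0)" for p
    have "(\<Sum>w\<in>mono_words G n. of_rat (c w) * eval_mono G A w a b) = (\<Sum>w\<in>mono_words G n. of_rat (c w) * F (psi w))"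
      by (rule sum.cong) (use eval_psi[OF _ fin _ a b] A in \<open>auto simp: F_def\<close>)
    also have "\<dots> = (\<Sum>p\<in>psi ` mono_words G n. \<Sum>w\<in>{w\<in>mono_words G n. psi w = p}. of_rat (c w) * F (psi w))"
      by (rule sum.image_gen[OF finite_mw[OF fin]])
    also have "\<dots> = (\<Sum>p\<in>psi ` mono_words G n. F p * of_rat (\<Sum>w\<in>{w\<in>mono_words G n. psi w = p}. c w))"
      by (rule sum.cong[OF refl]) (simp add: of_rat_sum sum_distrib_left mult.commute)
    also have "\<dots> = 0" using c by (intro sum.neutral) auto
    finally show "(\<Sum>w\<in>mono_words G n. of_rat (c w) * eval_mono G A w a b) = 0" .
  qed
qed

lemma degw_parity: "wfw G w \<Longrightarrow> a \<in> carrier G \<Longrightarrow> even (degw G a w v + of_bool (v = a) + of_bool (v = endv G a w))"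
proof (induction w arbitrary: a)
  case Nil then show ?case by simp
next
  case (Cons x w)
  have g: "fst (snd x) \<in> carrier G" using Cons by simp
  have n: "nxt G a x \<in> carrier G" using nxt_closed Cons g by simp
  have IH: "even (degw G (nxt G a x) w v + of_bool (v = nxt G a x) + of_bool (v = endv G (nxt G a x) w))"
    using Cons n by simp
  have e: "of_bool (fst (edg G a x) = v) + of_bool (snd (edg G a x) = v) = (of_bool (v = a) + of_bool (v = nxt G a x) :: nat)"
    using edg_ends[OF Cons.prems(2) g] by auto
  have "degw G a (x#w) v + of_bool (v = a) + of_bool (v = endv G a (x#w)) =
     2 * of_bool (v = a) + (degw G (nxt G a x) w v + of_bool (v = nxt G a x) + of_bool (v = endv G (nxt G a x) w))"
    using e by simp
  then show ?case using IH by presburger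
qed

lemma degw_gr: "wfw G w \<Longrightarrow> degw G a w v = (\<Sum>i\<in>fst ` set w. of_bool (fst (gr G a w i) = v) + of_bool (snd (gr G a w i) = v))"
proof (induction w arbitrary: a)
  case Nil then show ?case by simp
next
  case (Cons x w)
  have ni: "fst x \<notin> fst ` set w" using Cons by simp
  have "(\<Sum>i\<in>fst ` set w. of_bool (fst (gr G (nxt G a x) w i) = v) + of_bool (snd (gr G (nxt G a x) w i) = v)) =
        (\<Sum>i\<in>fst ` set w. of_bool (fst (gr G a (x#w) i) = v) + of_bool (snd (gr G a (x#w) i) = v) :: nat)"
  proof (rule sum.cong[OF refl])
    fix i assume "i \<in> fst ` set w" then have "i \<noteq> fst x" using ni by blast
    then show "of_bool (fst (gr G (nxt G a x) w i) = v) + of_bool (snd (gr G (nxt G a x) w i) = v) =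
        (of_bool (fst (gr G a (x#w) i) = v) + of_bool (snd (gr G a (x#w) i) = v) :: nat)" by simp
  qed
  then show ?case using Cons ni by (simp add: sum.insert)
qed

lemma psi_inj: assumes fin: "finite (carrier G)" shows "inj_on fst (psi ` mono_words G n)"
proof (rule inj_onI)
  fix p1 p2 assume p1: "p1 \<in> psi ` mono_words G n" and p2: "p2 \<in> psi ` mono_words G n" and e: "fst p1 = fst p2"
  obtain w1 w2 where w: "w1 \<in> mono_words G n" "w2 \<in> mono_words G n" "p1 = psi w1" "p2 = psi w2" using p1 p2 by auto
  have ww: "wfw G w1" "wfw G w2" "fst ` set w1 = {1..n}" "fst ` set w2 = {1..n}" using mw_props w by auto
  have gg: "gr G \<one> w1 = gr G \<one> w2" using e w by (simp add: psi_def)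
  have dd: "degw G \<one> w1 v = degw G \<one> w2 v" for v using degw_gr[OF ww(1)] degw_gr[OF ww(2)] ww gg by simp
  have "endv G \<one> w1 = endv G \<one> w2"
  proof (rule ccontr)
    assume ne: "endv G \<one> w1 \<noteq> endv G \<one> w2"
    let ?v = "endv G \<one> w1"
    have "even (degw G \<one> w1 ?v + of_bool (?v = \<one>) + 1)" using degw_parity[OF ww(1) one_closed, of ?v] by simp
    moreover have "even (degw G \<one> w1 ?v + of_bool (?v = \<one>) + 0)" using degw_parity[OF ww(2) one_closed, of ?v] ne dd by simp
    ultimately show False by (cases "?v = \<one>") auto
  qed
  then show "p1 = p2" using gg w by (simp add: psi_def)
qed

lemma walk_len: "length (walk G a w) = Suc (length w)" by (induction w arbitrary: a) auto
lemma walk_0: "walk G a w ! 0 = a" by (cases w) auto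
lemma walk_Suc: "j < length w \<Longrightarrow> walk G a w ! Suc j = nxt G (walk G a w ! j) (w ! j)"
proof (induction w arbitrary: a j)
  case Nil then show ?case by simp
next
  case (Cons x w) then show ?case by (cases j) (auto simp: walk_0)
qed
lemma walk_closed: "wfw G w \<Longrightarrow> a \<in> carrier G \<Longrightarrow> j \<le> length w \<Longrightarrow> walk G a w ! j \<in> carrier G"
proof (induction w arbitrary: a j)
  case Nil then show ?case by simp
next
  case (Cons x w) then show ?case by (cases j) (auto simp: nxt_closed)
qed
lemma gr_nth: "distinct (map fst w) \<Longrightarrow> j < length w \<Longrightarrow> gr G a w (fst (w ! j)) = edg G (walk G a w ! j) (w ! j)"
proof (induction w arbitrary: a j)
  case Nil then show ?case by simp
next
  case (Cons x w)
  show ?case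
  proof (cases j)
    case 0 then show ?thesis by simp
  next
    case (Suc j')
    have "fst (w ! j') \<noteq> fst x" using Cons Suc by (auto simp: image_iff) (metis nth_mem)
    then show ?thesis using Cons Suc by simp
  qed
qed
lemma walk_eq: "length vs = Suc (length w) \<Longrightarrow> vs ! 0 = a \<Longrightarrow> (\<forall>j<length w. vs ! Suc j = nxt G (vs ! j) (w ! j)) \<Longrightarrow> walk G a w = vs"
proof (induction w arbitrary: a vs)
  case Nil then show ?case by (cases vs) auto
next
  case (Cons x w)
  then obtain vs' where vs: "vs = a # vs'" by (cases vs) auto
  have "walk G (nxt G a x) w = vs'"
  proof (rule Cons.IH)
    show "length vs' = Suc (length w)" using Cons vs by simp
    show "vs' ! 0 = nxt G a x" using Cons.prems(3)[rule_format, of 0] vs by simp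
    show "\<forall>j<length w. vs' ! Suc j = nxt G (vs' ! j) (w ! j)"
      using Cons.prems(3) vs by auto
  qed
  then show ?case using vs by simp
qed

definition eulerset where "eulerset n = {E \<in> {1..n} \<rightarrow>\<^sub>E carrier G \<times> carrier G. has_euler_path_from E n \<one>}"

lemma gr_euler: assumes w: "w \<in> mono_words G n" shows "gr G \<one> w \<in> eulerset n"
proof -
  have ww: "wfw G w" and fs: "fst ` set w = {1..n}" and l: "length w = n" using mw_props[OF w] by auto
  have pie: "gr G \<one> w \<in> {1..n} \<rightarrow>\<^sub>E carrier G \<times> carrier G"
    using gr_closed[OF ww one_closed] gr_out[of _ w \<one>] fs by (auto simp: PiE_def extensional_def)
  have "has_euler_path_from (gr G \<one> w) n \<one>" unfolding has_euler_path_from_def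
  proof (intro exI conjI allI impI)
    show "distinct (map fst w)" using ww by (simp add: wfw_def)
    show "set (map fst w) = {1..n}" using fs by simp
    show "length (walk G \<one> w) = Suc n" using l walk_len by simp
    show "walk G \<one> w ! 0 = \<one>" by (rule walk_0)
    fix j assume j: "j < n"
    have "map fst w ! j = fst (w ! j)" using j l by simp
    moreover have "gr G \<one> w (fst (w ! j)) = edg G (walk G \<one> w ! j) (w ! j)"
      using gr_nth[of w j] ww j l by (simp add: wfw_def)
    moreover have "fst (snd (w ! j)) \<in> carrier G" using ww j l by (simp add: wfw_def)
    moreover have "walk G \<one> w ! j \<in> carrier G" using walk_closed[OF ww one_closed, of j] j l by simp
    ultimately show "gr G \<one> w (map fst w ! j) = (walk G \<one> w ! j, walk G \<one> w ! Suc j) \<or>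
        gr G \<one> w (map fst w ! j) = (walk G \<one> w ! Suc j, walk G \<one> w ! j)"
      using edg_ends walk_Suc[of j w \<one>] j l by auto
  qed
  then show ?thesis using pie by (simp add: eulerset_def)
qed

lemma euler_gr: assumes E: "E \<in> eulerset n" shows "E \<in> gr G \<one> ` mono_words G n"
proof -
  have pie: "E \<in> {1..n} \<rightarrow>\<^sub>E carrier G \<times> carrier G" and h: "has_euler_path_from E n \<one>"
    using E by (auto simp: eulerset_def)
  obtain es vs where es: "distinct es" "set es = {1..n}" and vs: "length vs = Suc n" "vs ! 0 = \<one>"
    and ed: "\<And>j. j < n \<Longrightarrow> E (es ! j) = (vs ! j, vs ! Suc j) \<or> E (es ! j) = (vs ! Suc j, vs ! j)"
    using h unfolding has_euler_path_from_def by blast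
  have les: "length es = n" using distinct_card[OF es(1)] es(2) by simp
  have Ec: "E (es ! j) \<in> carrier G \<times> carrier G" if "j < n" for j
    using pie es les that nth_mem[of j es] by (auto simp: PiE_def Pi_def)
  define w where "w = map (\<lambda>j. (es ! j, inv (fst (E (es ! j))) \<otimes> snd (E (es ! j)), E (es ! j) \<noteq> (vs ! j, vs ! Suc j))) [0..<n]"
  have lw: "length w = n" by (simp add: w_def)
  have mfw: "map fst w = es" using les by (auto simp: w_def intro: nth_equalityI)
  have wj: "w ! j = (es ! j, inv (fst (E (es ! j))) \<otimes> snd (E (es ! j)), E (es ! j) \<noteq> (vs ! j, vs ! Suc j))" if "j < n" for j
    using that by (simp add: w_def)
  have key: "vs ! Suc j = nxt G (vs ! j) (w ! j) \<and> E (es ! j) = edg G (vs ! j) (w ! j)" if j: "j < n" for j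
  proof -
    obtain u v where uv: "E (es ! j) = (u, v)" by force
    have uc: "u \<in> carrier G" "v \<in> carrier G" using Ec[OF j] uv by auto
    show ?thesis
    proof (cases "E (es ! j) = (vs ! j, vs ! Suc j)")
      case True
      then have "u = vs ! j" "v = vs ! Suc j" using uv by auto
      moreover have "u \<otimes> (inv u \<otimes> v) = v" using uc by (simp add: m_assoc[symmetric])
      ultimately show ?thesis using True wj[OF j] uv by (simp add: nxt_def edg_def)
    next
      case False
      then have "E (es ! j) = (vs ! Suc j, vs ! j)" using ed[OF j] by auto
      then have uv2: "u = vs ! Suc j" "v = vs ! j" using uv by auto
      have "v \<otimes> inv (inv u \<otimes> v) = u" using uc by (simp add: inv_mult_group m_assoc[symmetric])
      then show ?thesis using False wj[OF j] uv uv2 by (simp add: nxt_def edg_def)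
    qed
  qed
  have walkw: "walk G \<one> w = vs" by (rule walk_eq) (use vs lw key in auto)
  have wmw: "w \<in> mono_words G n"
  proof -
    have "fst (snd x) \<in> carrier G" if x: "x \<in> set w" for x
    proof -
      obtain j where j: "j < n" "x = w ! j" using x lw by (metis in_set_conv_nth)
      then show ?thesis using Ec[OF j(1)] wj[OF j(1)] by (auto simp: case_prod_beta)
    qed
    moreover have sf: "fst ` set w = {1..n}" using arg_cong[OF mfw, of set] es by simp
    ultimately show ?thesis using lw by (simp add: mono_words_def)
  qed
  have "gr G \<one> w = E"
  proof
    fix i show "gr G \<one> w i = E i"
    proof (cases "i \<in> {1..n}")
      case True
      then obtain j where j: "j < n" "i = es ! j" using es les by (metis in_set_conv_nth)
      have "fst (w ! j) = es ! j" using mfw j lw by (metis nth_map)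
      then have "gr G \<one> w i = edg G (walk G \<one> w ! j) (w ! j)"
        using gr_nth[of w j \<one>] mfw es j lw by simp
      then show ?thesis using key[OF j(1)] walkw j by simp
    next
      case False
      have sf: "fst ` set w = {1..n}" using arg_cong[OF mfw, of set] es by simp
      then show ?thesis using gr_out[of i w \<one>] False pie by (simp add: PiE_def extensional_def)
    qed
  qed
  then show ?thesis using wmw by blast
qed

lemma card_psi: assumes fin: "finite (carrier G)"
  shows "card (psi ` mono_words G n) = card (eulerset n)"
proof -
  have "card (psi ` mono_words G n) = card (fst ` psi ` mono_words G n)"
    using card_image[OF psi_inj[OF fin]] by simp
  also have "fst ` psi ` mono_words G n = gr G \<one> ` mono_words G n" by (force simp: psi_def image_image)
  also have "\<dots> = eulerset n" using gr_euler euler_gr by blast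
  finally show ?thesis .
qed

end

definition Fm :: "nat \<Rightarrow> ('v \<Rightarrow> 'w) \<Rightarrow> (nat \<Rightarrow> 'v \<times> 'v) \<Rightarrow> nat \<Rightarrow> 'w \<times> 'w" where
  "Fm n f E = (\<lambda>i. if i \<in> {1..n} then map_prod f f (E i) else undefined)"

lemma Fm_mem:
  assumes f: "f ` V \<subseteq> V'" and v0: "f v0 = v0'"
    and E: "E \<in> {E \<in> {1..n} \<rightarrow>\<^sub>E V \<times> V. has_euler_path_from E n v0}"
  shows "Fm n f E \<in> {E \<in> {1..n} \<rightarrow>\<^sub>E V' \<times> V'. has_euler_path_from E n v0'}"
proof -
  have pie: "E \<in> {1..n} \<rightarrow>\<^sub>E V \<times> V" and h: "has_euler_path_from E n v0" using E by auto
  obtain es vs where es: "distinct es" "set es = {1..n}" and vs: "length vs = Suc n" "vs ! 0 = v0"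
    and ed: "\<And>j. j < n \<Longrightarrow> E (es ! j) = (vs ! j, vs ! Suc j) \<or> E (es ! j) = (vs ! Suc j, vs ! j)"
    using h unfolding has_euler_path_from_def by blast
  have les: "length es = n" using distinct_card[OF es(1)] es(2) by simp
  have "has_euler_path_from (Fm n f E) n v0'" unfolding has_euler_path_from_def
  proof (intro exI conjI allI impI)
    show "distinct es" "set es = {1..n}" by fact+
    show "length (map f vs) = Suc n" using vs by simp
    show "map f vs ! 0 = v0'" using vs v0 by simp
    fix j assume j: "j < n"
    have "es ! j \<in> {1..n}" using es les j nth_mem[of j es] by auto
    then show "Fm n f E (es ! j) = (map f vs ! j, map f vs ! Suc j) \<or> Fm n f E (es ! j) = (map f vs ! Suc j, map f vs ! j)"
      using ed[OF j] j vs by (auto simp: Fm_def)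
  qed
  moreover have "Fm n f E \<in> {1..n} \<rightarrow>\<^sub>E V' \<times> V'"
  proof (rule PiE_I)
    fix i assume i: "i \<in> {1..n}"
    have "E i \<in> V \<times> V" by (rule PiE_mem[OF pie i])
    then show "Fm n f E i \<in> V' \<times> V'" using i f by (cases "E i") (auto simp: Fm_def)
  next
    fix i assume "i \<notin> {1..n}" then show "Fm n f E i = undefined" by (auto simp: Fm_def)
  qed
  ultimately show ?thesis by simp
qed

lemma egc_bij:
  assumes f: "bij_betw f V V'" and v0: "f v0 = v0'" "v0 \<in> V"
  shows "euler_graph_count V v0 n = euler_graph_count V' v0' n"
proof -
  let ?S = "{E \<in> {1..n} \<rightarrow>\<^sub>E V \<times> V. has_euler_path_from E n v0}"
  let ?S' = "{E \<in> {1..n} \<rightarrow>\<^sub>E V' \<times> V'. has_euler_path_from E n v0'}"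
  define g where "g = inv_into V f"
  have g: "bij_betw g V' V" using f by (simp add: g_def bij_betw_inv_into)
  have gv0: "g v0' = v0" using bij_betw_inv_into_left[OF f v0(2)] v0(1) by (simp add: g_def)
  have fg: "f (g x) = x" if "x \<in> V'" for x using f that by (simp add: g_def bij_betw_inv_into_right)
  have inj: "inj_on (Fm n f) ?S"
  proof (rule inj_onI)
    fix E1 E2 assume E1: "E1 \<in> ?S" and E2: "E2 \<in> ?S" and e: "Fm n f E1 = Fm n f E2"
    show "E1 = E2"
    proof
      fix i show "E1 i = E2 i"
      proof (cases "i \<in> {1..n}")
        case True
        have h1: "map_prod f f (E1 i) = map_prod f f (E2 i)" using fun_cong[OF e, of i] True by (simp add: Fm_def)
        have p1: "E1 \<in> {1..n} \<rightarrow>\<^sub>E V \<times> V" and p2: "E2 \<in> {1..n} \<rightarrow>\<^sub>E V \<times> V" using E1 E2 by simp_all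
        have a1: "E1 i \<in> V \<times> V" by (rule PiE_mem[OF p1 True])
        have a2: "E2 i \<in> V \<times> V" by (rule PiE_mem[OF p2 True])
        obtain x1 y1 x2 y2 where xy: "E1 i = (x1, y1)" "E2 i = (x2, y2)" by (cases "E1 i", cases "E2 i") auto
        have inj: "inj_on f V" using bij_betw_imp_inj_on[OF f] .
        have "x1 = x2" using h1 xy a1 a2 inj_onD[OF inj] by auto
        moreover have "y1 = y2" using h1 xy a1 a2 inj_onD[OF inj] by auto
        ultimately show ?thesis using xy by simp
      next
        case False then show ?thesis using E1 E2 by (auto simp: PiE_def extensional_def)
      qed
    qed
  qed
  have "Fm n f ` ?S = ?S'"
  proof
    have f': "f ` V \<subseteq> V'" using f by (simp add: bij_betw_def)
    show "Fm n f ` ?S \<subseteq> ?S'"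
    proof (rule image_subsetI)
      fix E assume "E \<in> ?S" then show "Fm n f E \<in> ?S'" by (rule Fm_mem[OF f' v0(1)])
    qed
    show "?S' \<subseteq> Fm n f ` ?S"
    proof
      fix E' assume E': "E' \<in> ?S'"
      have g': "g ` V' \<subseteq> V" using g by (simp add: bij_betw_def)
      have m: "Fm n g E' \<in> ?S" by (rule Fm_mem[OF g' gv0 E'])
      have "Fm n f (Fm n g E') = E'"
      proof
        fix i show "Fm n f (Fm n g E') i = E' i"
        proof (cases "i \<in> {1..n}")
          case True
          have E'p: "E' \<in> {1..n} \<rightarrow>\<^sub>E V' \<times> V'" using E' by simp
          have "E' i \<in> V' \<times> V'" by (rule PiE_mem[OF E'p True])
          then show ?thesis using True fg by (cases "E' i") (auto simp: Fm_def)
        next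
          case False then show ?thesis using E' by (auto simp: Fm_def PiE_def extensional_def)
        qed
      qed
      then show "E' \<in> Fm n f ` ?S" by (rule image_eqI[OF _ m, of E', OF sym])
    qed
  qed
  then show ?thesis unfolding euler_graph_count_def using card_image[OF inj] by simp
qed

theorem mainTheorem11:
  fixes G :: "('a, 'b) monoid_scheme" and k n :: nat
  assumes "group G" and "finite (carrier G)" and "card (carrier G) = k" and "k \<ge> 2"
    and "n \<ge> 1"
  shows "graded_codim G n = euler_graph_count (carrier G) \<one>\<^bsub>G\<^esub> n
       \<and> graded_codim G n = m_count k n"
proof -
  interpret group G by fact
  have fin: "finite (carrier G)" by fact
  have finMW: "finite (mono_words G n)" using finite_mw[OF fin] .
  have Pn: "Pn G n = {c. \<forall>w. c w \<noteq> 0 \<longrightarrow> w \<in> mono_words G n}" by (simp add: Pn_def)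
  have d1: "vector_space.dim qscale (Pn G n) = card (mono_words G n)"
    unfolding Pn by (rule dim_full[OF finMW])
  have d2: "vector_space.dim qscale (Pn_Id G n) = card (mono_words G n) - card (psi ` mono_words G n)"
    unfolding PnId_char[OF fin] Pn by (rule dim_fib[OF finMW])
  have "graded_codim G n = card (mono_words G n) - (card (mono_words G n) - card (psi ` mono_words G n))"
    by (simp only: graded_codim_def d1 d2)
  also have "\<dots> = card (psi ` mono_words G n)" using card_image_le[OF finMW, of psi] by simp
  also have "\<dots> = card (eulerset n)" using card_psi[OF fin] .
  also have "\<dots> = euler_graph_count (carrier G) \<one>\<^bsub>G\<^esub> n" by (simp add: eulerset_def euler_graph_count_def)
  finally have c1: "graded_codim G n = euler_graph_count (carrier G) \<one>\<^bsub>G\<^esub> n" .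
  obtain h where h: "bij_betw h (carrier G) {0..<k}" using ex_bij_betw_finite_nat[OF fin] assms(3) by auto
  have h1: "h \<one>\<^bsub>G\<^esub> \<in> {0..<k}" using h by (auto simp: bij_betw_def)
  have "bij_betw (transpose (h \<one>\<^bsub>G\<^esub>) 0) {0..<k} {0..<k}" using h1 assms(4) by simp
  then have hb: "bij_betw (transpose (h \<one>\<^bsub>G\<^esub>) 0 \<circ> h) (carrier G) {0..<k}" using bij_betw_trans[OF h] by blast
  have "euler_graph_count (carrier G) \<one>\<^bsub>G\<^esub> n = euler_graph_count {0..<k} (0::nat) n"
    by (rule egc_bij[OF hb]) auto
  then show ?thesis using c1 by (simp add: m_count_def)
qed

end
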